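(* Define on $(0,\infty)^4$ the function $$S(x_1,x_2,x_3,x_4)=(x_1^2x_2^2x_3^2x_4)^{1/7}\Big[\tfrac{12}{x_1}+\tfrac{12}{x_2}+\tfrac{12}{x_3}+\tfrac{6}{x_4}-2\Big(\tfrac{x_1}{x_2x_3}+\tfrac{x_2}{x_1x_3}+\tfrac{x_3}{x_1x_2}\Big)-3\Big(\tfrac{x_1}{x_2x_4}+\tfrac{x_2}{x_1x_4}+\tfrac{x_4}{x_1x_2}\Big)\Big].$$ Let $x^*=(x_1,x_2,x_3,x_4)\approx(5.67352,1.09220,5.50695,5.72906)$ be the critical point of $S$ corresponding to Nikonorov's non-block-diagonal $\mathrm{SU}(3)$-invariant Einstein metric on $N^{130}$. Then $\frac{\partial^2 S}{\partial x_2^2}(x^* )>0$.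
   Context: $S$ is, up to a positive constant factor, the normalized total scalar curvature $\mathrm{Vol}^{2/7}\cdot s$ of the $\mathrm{SU}(3)$-invariant metrics $x_1Q'|_{\mathfrak p_1}\oplus x_2Q'|_{\mathfrak p_2}\oplus x_3Q'|_{\mathfrak p_3}\oplus x_4Q'|_{\mathfrak p_4}$ on the Aloff–Wallach space $N^{130}=N_{1,0}$, where $Q'(X,Y)=-\frac12\mathrm{tr}(XY)$ and $\mathfrak p_1\oplus\cdots\oplus\mathfrak p_4$ is Nikonorov's $\mathrm{Ad}$-invariant decomposition with parameter $\sin^2(2\alpha)=1$; Einstein metrics in this family are critical points of $S$. *)

theory Defs
  imports "HOL-Analysis.Analysis"
begin

definition S :: "real \<Rightarrow> real \<Rightarrow> real \<Rightarrow> real \<Rightarrow> real" where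
  "S x1 x2 x3 x4 =
     (x1^2 * x2^2 * x3^2 * x4) powr (1/7) *
     (12/x1 + 12/x2 + 12/x3 + 6/x4
      - 2 * (x1/(x2*x3) + x2/(x1*x3) + x3/(x1*x2))
      - 3 * (x1/(x2*x4) + x2/(x1*x4) + x4/(x1*x2)))"

definition critical_S :: "real \<Rightarrow> real \<Rightarrow> real \<Rightarrow> real \<Rightarrow> bool" where
  "critical_S x1 x2 x3 x4 \<longleftrightarrow>
     x1 > 0 \<and> x2 > 0 \<and> x3 > 0 \<and> x4 > 0 \<and>
     ((\<lambda>t. S t x2 x3 x4) has_real_derivative 0) (at x1) \<and>
     ((\<lambda>t. S x1 t x3 x4) has_real_derivative 0) (at x2) \<and>
     ((\<lambda>t. S x1 x2 t x4) has_real_derivative 0) (at x3) \<and>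
     ((\<lambda>t. S x1 x2 x3 t) has_real_derivative 0) (at x4)"

end

theory Submission
  imports Defs
begin

lemma fracb: "(a::real) \<le> u \<Longrightarrow> l \<le> b \<Longrightarrow> 0 < l \<Longrightarrow> 0 \<le> a \<Longrightarrow> a / b \<le> u / l"
  by (meson frac_le order_trans divide_right_mono order_less_le_trans)

lemma pw1: "(t::real) > 0 \<Longrightarrow> t powr (a+1) = t powr a * t"
  unfolding powr_add by simp
lemma pw2: "(t::real) > 0 \<Longrightarrow> t powr (a+2) = t powr a * t^2"
  unfolding powr_add by (simp add: powr_realpow)

theorem proposition2p5:
  fixes x1 x2 x3 x4 :: real
  assumes "critical_S x1 x2 x3 x4"
    and "\<bar>x1 - 5.67352\<bar> \<le> 1/10000" and "\<bar>x2 - 1.09220\<bar> \<le> 1/10000"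
    and "\<bar>x3 - 5.50695\<bar> \<le> 1/10000" and "\<bar>x4 - 5.72906\<bar> \<le> 1/10000"
  shows "deriv (\<lambda>t. deriv (\<lambda>s. S x1 s x3 x4) t) x2 > 0"
proof -
  have b1: "5.67 \<le> x1" "x1 \<le> 5.68" using assms(2) unfolding abs_le_iff by simp_all
  have b2: "1.09 \<le> x2" "x2 \<le> 1.1" using assms(3) unfolding abs_le_iff by simp_all
  have b3: "5.50 \<le> x3" "x3 \<le> 5.51" using assms(4) unfolding abs_le_iff by simp_all
  have b4: "5.72 \<le> x4" "x4 \<le> 5.73" using assms(5) unfolding abs_le_iff by simp_all
  have p1: "x1 > 0" and p3: "x3 > 0" and p4: "x4 > 0" using b1 b3 b4 by auto
  define A where "A = 12/x1 + 12/x3 + 6/x4"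
  define B where "B = 12 - 2*(x1/x3) - 2*(x3/x1) - 3*(x1/x4) - 3*(x4/x1)"
  define D where "D = 2/(x1*x3) + 3/(x1*x4)"
  define C where "C = (x1^2*x3^2*x4) powr (1/7)"
  have Cpos: "C > 0" unfolding C_def using p1 p3 p4 by simp
  define h1 where "h1 = (\<lambda>t::real. C*(A*(2/7)*t powr(-5/7) - B*(5/7)*t powr(-12/7) - D*(9/7)*t powr(2/7)))"
  have eq: "S x1 t x3 x4 = C*(A*t powr(2/7) + B*t powr(-5/7) - D*t powr(9/7))" if t: "t > 0" for t
  proof -
    have "t powr(2/7) = t powr(-5/7 + 1)" by simp
    also have "\<dots> = t powr(-5/7) * t" unfolding powr_add using t by simp
    finally have e1: "t powr(-5/7) = t powr(2/7)/t" using t by (simp add: field_simps)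
    have e2: "t powr(9/7) = t powr(2/7)*t" using pw1[OF t, of "2/7"] by simp
    have e3: "(x1^2*t^2*x3^2*x4) powr (1/7) = C * t powr (2/7)"
    proof -
      have "(x1^2*t^2*x3^2*x4) = (x1^2*x3^2*x4) * t^2" by simp
      hence "(x1^2*t^2*x3^2*x4) powr (1/7) = C * (t^2) powr (1/7)"
        unfolding C_def using p1 p3 p4 t by (simp add: powr_mult)
      also have "(t^2) powr (1/7) = (t powr 2) powr (1/7)" using t by (simp add: powr_realpow)
      also have "\<dots> = t powr (2/7)" by (simp add: powr_powr)
      finally show ?thesis .
    qed
    show ?thesis unfolding S_def e3 e1 e2 A_def B_def D_def using t p1 p3 p4
      by (simp add: field_simps)
  qed
  have d1: "((\<lambda>s. S x1 s x3 x4) has_real_derivative h1 t) (at t)" if t: "t > 0" for t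
  proof -
    have "((\<lambda>s. C*(A * s powr(2/7) + B * s powr(-5/7) - D * s powr(9/7))) has_real_derivative h1 t) (at t)"
      unfolding h1_def using t
      by (auto intro!: derivative_eq_intros simp: field_simps)
    then show ?thesis
      apply (rule has_field_derivative_transform_within_open[where S="{0<..}"])
      using t eq by auto
  qed
  have dd: "deriv (\<lambda>s. S x1 s x3 x4) t = h1 t" if "t > 0" for t
    using d1[OF that] by (rule DERIV_imp_deriv)
  define h2 where "h2 = C*(-(10/49)*A*x2 powr(-12/7) + (60/49)*B*x2 powr(-19/7) - (18/49)*D*x2 powr(-5/7))"
  have x2p: "x2 > 0" using b2 by auto
  have "(h1 has_real_derivative h2) (at x2)"
    unfolding h1_def h2_def using x2p
    by (auto intro!: derivative_eq_intros simp: field_simps)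
  hence "(deriv (\<lambda>s. S x1 s x3 x4) has_real_derivative h2) (at x2)"
    apply (rule has_field_derivative_transform_within_open[where S="{0<..}"])
    using x2p dd by auto
  hence dv: "deriv (\<lambda>t. deriv (\<lambda>s. S x1 s x3 x4) t) x2 = h2" by (rule DERIV_imp_deriv)
  have q1: "x2 powr(-12/7) = x2 powr(-19/7) * x2" using pw1[OF x2p, of "-19/7"] by simp
  have q2: "x2 powr(-5/7) = x2 powr(-19/7) * x2^2" using pw2[OF x2p, of "-19/7"] by simp
  have h2e: "h2 = C * x2 powr(-19/7) * (60*B - 10*A*x2 - 18*D*x2^2) / 49"
    unfolding h2_def q1 q2 by (simp add: field_simps)
  have t1: "x1/x3 \<le> 5.68/5.50" by (rule fracb) (use b1 b3 in auto)
  have t2: "x3/x1 \<le> 5.51/5.67" by (rule fracb) (use b1 b3 in auto)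
  have t3: "x1/x4 \<le> 5.68/5.72" by (rule fracb) (use b1 b4 in auto)
  have t4: "x4/x1 \<le> 5.73/5.67" by (rule fracb) (use b1 b4 in auto)
  have Bl: "B \<ge> 1.97" unfolding B_def using t1 t2 t3 t4 by simp
  have u1: "12/x1 \<le> 12/5.67" by (rule fracb) (use b1 in auto)
  have u3: "12/x3 \<le> 12/5.50" by (rule fracb) (use b3 in auto)
  have u4: "6/x4 \<le> 6/5.72" by (rule fracb) (use b4 in auto)
  have Au: "A \<le> 5.35" and A0: "A \<ge> 0" unfolding A_def using u1 u3 u4 p1 p3 p4 by simp_all
  have m1: "5.67*5.50 \<le> x1*x3" by (rule mult_mono) (use b1 b3 in auto)
  have m2: "5.67*5.72 \<le> x1*x4" by (rule mult_mono) (use b1 b4 in auto)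
  have v1: "2/(x1*x3) \<le> 2/(5.67*5.50)" by (rule fracb) (use m1 in auto)
  have v2: "3/(x1*x4) \<le> 3/(5.67*5.72)" by (rule fracb) (use m2 in auto)
  have Du: "D \<le> 0.16" and D0: "D \<ge> 0" unfolding D_def using v1 v2 p1 p3 p4 by simp_all
  have "A*x2 \<le> 5.35*1.1" using Au A0 b2 x2p by (intro mult_mono) auto
  moreover have "x2^2 \<le> 1.1^2" using b2 x2p by (intro power_mono) auto
  hence "D*x2^2 \<le> 0.16*1.1^2" using Du D0 by (intro mult_mono) auto
  ultimately have "60*B - 10*(A*x2) - 18*(D*x2^2) > 0" using Bl by (simp only: power2_eq_square)
  hence "60*B - 10*A*x2 - 18*D*x2^2 > 0" by (simp add: mult.assoc)
  then show ?thesis unfolding dv h2e using Cpos x2p by simp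
qed

end
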